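(* For every integer $s\ge 3$ and every $t\in\{0,1\}$ there exists $C>0$ such that every $K_{s,t}$-free graph $G$ admits a clique cover of size at most $C|G|^{2-1/s}$.
   Context: All graphs are finite and simple; $|G|$ is the number of vertices. A graph is $K_{s,t}$-free if it has no induced subgraph isomorphic to the complete bipartite graph $K_{s,t}$ (for $t=0$ this means no stable set of size $s$). A clique $X$ of $G$ covers an edge $uv$ if $u,v\in X$; a clique cover of $G$ is a collection of cliques of $G$ that together cover all edges of $G$, and its size is the number of cliques in it. *)

theory Defs
  imports Complex_Main
begin

definition simple_graph :: "'a set \<Rightarrow> ('a \<Rightarrow> 'a \<Rightarrow> bool) \<Rightarrow> bool" where
  "simple_graph V E \<longleftrightarrow> finite V \<and> (\<forall>u v. E u v \<longrightarrow> u \<in> V \<and> v \<in> V)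
     \<and> (\<forall>u v. E u v \<longrightarrow> E v u) \<and> (\<forall>v. \<not> E v v)"

definition stable_set :: "'a set \<Rightarrow> ('a \<Rightarrow> 'a \<Rightarrow> bool) \<Rightarrow> 'a set \<Rightarrow> bool" where
  "stable_set V E S \<longleftrightarrow> S \<subseteq> V \<and> (\<forall>u\<in>S. \<forall>v\<in>S. \<not> E u v)"

text \<open>G contains an induced subgraph isomorphic to K_{s,t}: disjoint stable
sets A, B with |A| = s, |B| = t and every vertex of A adjacent to every vertex of B.
(For t = 0 this is a stable set of size s.)\<close>
definition has_induced_Kst :: "'a set \<Rightarrow> ('a \<Rightarrow> 'a \<Rightarrow> bool) \<Rightarrow> nat \<Rightarrow> nat \<Rightarrow> bool" where
  "has_induced_Kst V E s t \<longleftrightarrow> (\<exists>A B. A \<inter> B = {} \<and> card A = s \<and> card B = t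
     \<and> finite A \<and> finite B
     \<and> stable_set V E A \<and> stable_set V E B \<and> (\<forall>a\<in>A. \<forall>b\<in>B. E a b))"

definition Kst_free :: "'a set \<Rightarrow> ('a \<Rightarrow> 'a \<Rightarrow> bool) \<Rightarrow> nat \<Rightarrow> nat \<Rightarrow> bool" where
  "Kst_free V E s t \<longleftrightarrow> \<not> has_induced_Kst V E s t"

definition is_clique :: "'a set \<Rightarrow> ('a \<Rightarrow> 'a \<Rightarrow> bool) \<Rightarrow> 'a set \<Rightarrow> bool" where
  "is_clique V E X \<longleftrightarrow> X \<subseteq> V \<and> (\<forall>u\<in>X. \<forall>v\<in>X. u \<noteq> v \<longrightarrow> E u v)"

definition clique_cover :: "'a set \<Rightarrow> ('a \<Rightarrow> 'a \<Rightarrow> bool) \<Rightarrow> 'a set set \<Rightarrow> bool" where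
  "clique_cover V E \<C> \<longleftrightarrow> finite \<C> \<and> (\<forall>X\<in>\<C>. is_clique V E X)
     \<and> (\<forall>u v. E u v \<longrightarrow> (\<exists>X\<in>\<C>. u \<in> X \<and> v \<in> X))"

end

theory Submission
  imports Defs
begin

definition indep :: "('a \<Rightarrow> 'a \<Rightarrow> bool) \<Rightarrow> 'a set \<Rightarrow> bool" where
  "indep E S \<longleftrightarrow> (\<forall>u\<in>S. \<forall>v\<in>S. \<not> E u v)"

definition clq :: "('a \<Rightarrow> 'a \<Rightarrow> bool) \<Rightarrow> 'a set \<Rightarrow> bool" where
  "clq E X \<longleftrightarrow> (\<forall>u\<in>X. \<forall>v\<in>X. u \<noteq> v \<longrightarrow> E u v)"

lemma greedy_clique:
  fixes E :: "'a \<Rightarrow> 'a \<Rightarrow> bool"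
  assumes sym: "\<forall>u v. E u v \<longrightarrow> E v u" and irr: "\<forall>v. \<not> E v v" and D: "D \<ge> 1"
  shows "finite W \<Longrightarrow> \<forall>w\<in>W. card {u\<in>W. u \<noteq> w \<and> \<not> E w u} + 1 \<le> D
    \<Longrightarrow> card W \<ge> j * D \<Longrightarrow> \<exists>X\<subseteq>W. clq E X \<and> card X \<ge> j"
proof (induction j arbitrary: W)
  case 0
  then show ?case by (auto simp: clq_def)
next
  case (Suc j)
  have "card W \<ge> 1" using Suc.prems(3) D by (simp add: le_trans)
  then obtain w where w: "w \<in> W" by (metis card.empty ex_in_conv not_one_le_zero)
  define M where "M = {u\<in>W. u \<noteq> w \<and> \<not> E w u}"
  define W' where "W' = {u\<in>W. E w u}"
  have "W \<subseteq> insert w (M \<union> W')" unfolding M_def W'_def by auto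
  hence "card W \<le> card (insert w (M \<union> W'))" using Suc.prems(1) by (intro card_mono) (auto simp: M_def W'_def)
  also have "\<dots> \<le> 1 + card M + card W'"
  proof -
    have "finite (M \<union> W')" using Suc.prems(1) by (auto simp: M_def W'_def)
    hence "card (insert w (M \<union> W')) \<le> Suc (card (M \<union> W'))" by (simp add: card_insert_if)
    thus ?thesis using card_Un_le[of M W'] by linarith
  qed
  finally have cW: "card W \<le> 1 + card M + card W'" .
  have "card M + 1 \<le> D" using Suc.prems(2) w unfolding M_def by auto
  hence cW': "card W' \<ge> j * D" using cW Suc.prems(3) by simp
  have fW': "finite W'" using Suc.prems(1) unfolding W'_def by auto
  have degW': "\<forall>x\<in>W'. card {u\<in>W'. u \<noteq> x \<and> \<not> E x u} + 1 \<le> D"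
  proof
    fix x assume x: "x \<in> W'"
    have "card {u\<in>W'. u \<noteq> x \<and> \<not> E x u} \<le> card {u\<in>W. u \<noteq> x \<and> \<not> E x u}"
      using Suc.prems(1) by (intro card_mono) (auto simp: W'_def)
    thus "card {u\<in>W'. u \<noteq> x \<and> \<not> E x u} + 1 \<le> D" using Suc.prems(2) x unfolding W'_def by force
  qed
  obtain X where X: "X \<subseteq> W'" "clq E X" "card X \<ge> j" using Suc.IH[OF fW' degW' cW'] by blast
  have wX: "w \<notin> X" using X(1) assms by (auto simp: W'_def)
  have "finite X" using X(1) fW' finite_subset by blast
  hence "card (insert w X) = Suc (card X)" using wX by simp
  moreover have "clq E (insert w X)" using X(1,2) sym unfolding clq_def W'_def by blast
  moreover have "insert w X \<subseteq> W" using X(1) w unfolding W'_def by auto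
  ultimately show ?case using X(3) by (metis Suc_le_mono)
qed

lemma ramsey_clique:
  fixes E :: "'a \<Rightarrow> 'a \<Rightarrow> bool"
  assumes sym: "\<forall>u v. E u v \<longrightarrow> E v u" and irr: "\<forall>v. \<not> E v v" and k: "k \<ge> 1"
  shows "finite W \<Longrightarrow> \<forall>S\<subseteq>W. indep E S \<longrightarrow> card S \<le> r
    \<Longrightarrow> card W \<ge> k ^ r \<Longrightarrow> \<exists>X\<subseteq>W. clq E X \<and> card X \<ge> k"
proof (induction r arbitrary: W)
  case 0
  then obtain w where w: "w \<in> W" by (metis card.empty ex_in_conv not_one_le_zero power_0)
  have "indep E {w}" using irr by (simp add: indep_def)
  then show ?case using 0(2) w by auto
next
  case (Suc r)
  show ?case
  proof (cases "\<exists>w\<in>W. card {u\<in>W. u \<noteq> w \<and> \<not> E w u} \<ge> k ^ r")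
    case True
    then obtain w where w: "w \<in> W" and cM: "card {u\<in>W. u \<noteq> w \<and> \<not> E w u} \<ge> k ^ r" by blast
    define M where "M = {u\<in>W. u \<noteq> w \<and> \<not> E w u}"
    have fM: "finite M" using Suc.prems(1) by (auto simp: M_def)
    have indM: "\<forall>S\<subseteq>M. indep E S \<longrightarrow> card S \<le> r"
    proof (intro allI impI)
      fix S assume S: "S \<subseteq> M" "indep E S"
      have "indep E (insert w S)" using S sym irr unfolding indep_def M_def by blast
      moreover have "insert w S \<subseteq> W" using S w unfolding M_def by auto
      ultimately have "card (insert w S) \<le> Suc r" using Suc.prems(2) by blast
      moreover have "w \<notin> S" using S unfolding M_def by auto
      moreover have "finite S" using S fM finite_subset by blast
      ultimately show "card S \<le> r" by simp
    qed
    obtain X where "X \<subseteq> M" "clq E X" "card X \<ge> k"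
      using Suc.IH[OF fM indM] cM unfolding M_def by blast
    then show ?thesis unfolding M_def by blast
  next
    case False
    hence deg: "\<forall>w\<in>W. card {u\<in>W. u \<noteq> w \<and> \<not> E w u} + 1 \<le> k ^ r" by auto
    have "card W \<ge> k * k ^ r" using Suc.prems(3) by simp
    from greedy_clique[OF sym irr _ Suc.prems(1) deg this] k show ?thesis by simp
  qed
qed

lemma cover_vertices:
  fixes E :: "'a \<Rightarrow> 'a \<Rightarrow> bool"
  assumes sym: "\<forall>u v. E u v \<longrightarrow> E v u" and irr: "\<forall>v. \<not> E v v" and k: "k \<ge> 1"
  shows "finite W \<Longrightarrow> \<forall>S\<subseteq>W. indep E S \<longrightarrow> card S \<le> r
    \<Longrightarrow> \<exists>Q. finite Q \<and> (\<forall>X\<in>Q. X \<subseteq> W \<and> clq E X) \<and> (\<forall>w\<in>W. \<exists>X\<in>Q. w \<in> X)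
         \<and> k * card Q \<le> card W + k ^ Suc r"
proof (induction "card W" arbitrary: W rule: less_induct)
  case less
  show ?case
  proof (cases "card W < k ^ r")
    case True
    define Q where "Q = (\<lambda>w. {w}) ` W"
    have "card Q \<le> card W" unfolding Q_def by (rule card_image_le[OF less.prems(1)])
    hence "k * card Q \<le> k * k ^ r" using True by (meson less_imp_le_nat mult_le_mono2 order_trans)
    hence "k * card Q \<le> card W + k ^ Suc r" by (simp only: power_Suc)
    moreover have "\<forall>X\<in>Q. X \<subseteq> W \<and> clq E X" unfolding Q_def clq_def by auto
    moreover have "\<forall>w\<in>W. \<exists>X\<in>Q. w \<in> X" unfolding Q_def by auto
    moreover have "finite Q" unfolding Q_def using less.prems(1) by simp
    ultimately show ?thesis by blast
  next
    case False
    then obtain X where X: "X \<subseteq> W" "clq E X" "card X \<ge> k"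
      using ramsey_clique[OF sym irr k less.prems(1,2)] by force
    have fX: "finite X" using X(1) less.prems(1) finite_subset by blast
    have "X \<noteq> {}" using X(3) k by auto
    hence "card X > 0" using fX by auto
    moreover have "card (W - X) = card W - card X" using X(1) fX by (simp add: card_Diff_subset)
    moreover have "card X \<le> card W" using X(1) less.prems(1) card_mono by blast
    ultimately have lt: "card (W - X) < card W" by linarith
    have fWX: "finite (W - X)" using less.prems(1) by simp
    have indWX: "\<forall>S\<subseteq>W - X. indep E S \<longrightarrow> card S \<le> r" using less.prems(2) by blast
    obtain Q where Q: "finite Q" "\<forall>Y\<in>Q. Y \<subseteq> W - X \<and> clq E Y" "\<forall>w\<in>W - X. \<exists>Y\<in>Q. w \<in> Y"
        "k * card Q \<le> card (W - X) + k ^ Suc r"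
      using less.hyps[OF lt fWX indWX] by blast
    have cWX: "card (W - X) = card W - card X" using X(1) fX by (simp add: card_Diff_subset)
    have cWX2: "card X \<le> card W" using X(1) less.prems(1) card_mono by blast
    have "card (insert X Q) \<le> Suc (card Q)" by (simp add: card_insert_if Q(1))
    hence "k * card (insert X Q) \<le> k + k * card Q" by (metis mult_Suc_right mult_le_mono2)
    also have "\<dots> \<le> card W + k ^ Suc r" using Q(4) cWX cWX2 X(3) by linarith
    finally have "k * card (insert X Q) \<le> card W + k ^ Suc r" .
    moreover have "\<forall>Y\<in>insert X Q. Y \<subseteq> W \<and> clq E Y" using Q(2) X by auto
    moreover have "\<forall>w\<in>W. \<exists>Y\<in>insert X Q. w \<in> Y" using Q(3) by blast
    ultimately show ?thesis using Q(1) by (intro exI[of _ "insert X Q"]) auto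
  qed
qed

lemma real_bound:
  fixes n k c s :: nat
  assumes s: "s \<ge> 1" and n: "n \<ge> 1" and k: "k \<ge> 1"
    and kx: "real k \<le> real n powr (1 / real s)" and xk: "real n powr (1 / real s) < 2 * real k"
    and main: "k * c \<le> n * (n + k ^ s)"
  shows "real c \<le> 3 * real n powr (2 - 1 / real s)"
proof -
  define x where "x = real n powr (1 / real s)"
  have xpos: "x > 0" using n by (simp add: x_def)
  have kpos: "real k > 0" using k by simp
  have ks: "real k ^ s = real k * real k ^ (s - 1)" using s
    by (metis Suc_diff_1 less_le_trans power_Suc zero_less_one)
  have "real k * real c \<le> real n * (real n + real k ^ s)"
    using main by (metis of_nat_le_iff of_nat_mult of_nat_add of_nat_power)
  hence "real c \<le> real n * (real n + real k ^ s) / real k"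
    using kpos by (simp add: pos_le_divide_eq mult.commute)
  also have "\<dots> = real n * real n / real k + real n * real k ^ (s - 1)"
    using kpos unfolding ks by (simp add: field_simps)
  finally have c1: "real c \<le> real n * real n / real k + real n * real k ^ (s - 1)" .
  have "1 / real k \<le> 2 / x" using xk xpos kpos unfolding x_def[symmetric] by (simp add: field_simps)
  hence t1: "real n * real n / real k \<le> 2 * (real n * real n / x)"
  proof -
    have "real n * real n * (1 / real k) \<le> real n * real n * (2 / x)"
      using \<open>1 / real k \<le> 2 / x\<close> by (intro mult_left_mono) auto
    thus ?thesis by (simp add: mult.commute)
  qed
  have "real n * real n / x = real n powr 2 / real n powr (1 / real s)"
    unfolding x_def using n by (simp add: power2_eq_square)
  also have "\<dots> = real n powr (2 - 1 / real s)" by (simp add: powr_diff)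
  finally have t1': "real n * real n / x = real n powr (2 - 1 / real s)" .
  have "real k ^ (s - 1) \<le> x ^ (s - 1)" using kx unfolding x_def[symmetric] by (intro power_mono) auto
  also have "\<dots> = real n powr (real (s - 1) * (1 / real s))" unfolding x_def using n by (simp add: powr_power)
  finally have t2: "real n * real k ^ (s - 1) \<le> real n * real n powr (real (s - 1) * (1 / real s))"
    by (simp add: mult_left_mono)
  have "real n * real n powr (real (s - 1) * (1 / real s)) = real n powr (1 + real (s - 1) * (1 / real s))"
    by (simp add: powr_mult_base)
  also have "1 + real (s - 1) * (1 / real s) = 2 - 1 / real s" using s by (simp add: of_nat_diff field_simps)
  finally have t2': "real n * real k ^ (s - 1) \<le> real n powr (2 - 1 / real s)" using t2 by simp
  show ?thesis using c1 t1 t1' t2' by linarith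
qed

theorem mainTheorem6:
  fixes s t :: nat
  assumes "s \<ge> 3" and "t \<in> {0, 1}"
  shows "\<exists>C::real. C > 0 \<and>
    (\<forall>(V::nat set) E. simple_graph V E \<and> Kst_free V E s t \<longrightarrow>
       (\<exists>\<C>. clique_cover V E \<C> \<and>
          real (card \<C>) \<le> C * real (card V) powr (2 - 1 / real s)))"
proof -
  obtain r where r: "s = Suc r" using assms(1) by (cases s) auto
  show ?thesis
  proof (intro exI[of _ 3] conjI allI impI)
    show "(0::real) < 3" by simp
    fix V :: "nat set" and E
    assume H: "simple_graph V E \<and> Kst_free V E s t"
    have fin: "finite V" and inV: "\<forall>u v. E u v \<longrightarrow> u \<in> V \<and> v \<in> V"
      and sym: "\<forall>u v. E u v \<longrightarrow> E v u" and irr: "\<forall>v. \<not> E v v"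
      using H unfolding simple_graph_def by auto
    have free: "\<not> has_induced_Kst V E s t" using H unfolding Kst_free_def by auto
    define n where "n = card V"
    show "\<exists>\<C>. clique_cover V E \<C> \<and> real (card \<C>) \<le> 3 * real (card V) powr (2 - 1 / real s)"
    proof (cases "n = 0")
      case True
      hence "V = {}" using fin unfolding n_def by simp
      hence "clique_cover V E {}" using inV unfolding clique_cover_def by auto
      thus ?thesis by (intro exI[of _ "{}"]) auto
    next
      case False
      hence n1: "n \<ge> 1" by simp
      define x where "x = real n powr (1 / real s)"
      have x1: "x \<ge> 1" unfolding x_def using n1 assms(1) by (intro ge_one_powr_ge_zero) auto
      define k where "k = nat \<lfloor>x\<rfloor>"
      have kx: "real k \<le> x" unfolding k_def using x1 by linarith
      have xk1: "x < real k + 1" unfolding k_def using x1 by linarith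
      have k1: "k \<ge> 1" unfolding k_def using x1 by linarith
      have xk: "x < 2 * real k" using xk1 k1 by linarith
      have nbr: "\<forall>v\<in>V. \<exists>Q. finite Q \<and> (\<forall>X\<in>Q. X \<subseteq> {u. E v u} \<and> clq E X)
          \<and> (\<forall>w\<in>{u. E v u}. \<exists>X\<in>Q. w \<in> X) \<and> k * card Q \<le> card {u. E v u} + k ^ Suc r"
      proof
        fix v assume v: "v \<in> V"
        have sub: "{u. E v u} \<subseteq> V" using inV by auto
        hence fN: "finite {u. E v u}" using fin finite_subset by blast
        have ind: "\<forall>S\<subseteq>{u. E v u}. indep E S \<longrightarrow> card S \<le> r"
        proof (intro allI impI, rule ccontr)
          fix S assume S: "S \<subseteq> {u. E v u}" "indep E S" "\<not> card S \<le> r"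
          have fS: "finite S" using S(1) fN finite_subset by blast
          obtain A where A: "A \<subseteq> S" "card A = s" using obtain_subset_with_card_n[of s S] S(3) r
            by (metis not_less_eq_eq)
          have fA: "finite A" using A(1) fS finite_subset by blast
          have stA: "stable_set V E A" using A(1) S(1,2) sub unfolding stable_set_def indep_def by blast
          have vA: "v \<notin> A" using A(1) S(1) irr by auto
          have "has_induced_Kst V E s t"
          proof (cases "t = 0")
            case True
            have "stable_set V E {}" by (simp add: stable_set_def)
            then show ?thesis unfolding has_induced_Kst_def
              by (intro exI[of _ A] exI[of _ "{}"]) (simp add: A(2) fA stA True)
          next
            case False
            hence t1: "t = 1" using assms(2) by auto
            have "stable_set V E {v}" using v irr unfolding stable_set_def by auto
            moreover have "\<forall>a\<in>A. \<forall>b\<in>{v}. E a b" using A(1) S(1) sym by auto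
            ultimately show ?thesis unfolding has_induced_Kst_def
              by (intro exI[of _ A] exI[of _ "{v}"]) (simp add: A(2) fA stA t1 vA)
          qed
          thus False using free by simp
        qed
        show "\<exists>Q. finite Q \<and> (\<forall>X\<in>Q. X \<subseteq> {u. E v u} \<and> clq E X)
          \<and> (\<forall>w\<in>{u. E v u}. \<exists>X\<in>Q. w \<in> X) \<and> k * card Q \<le> card {u. E v u} + k ^ Suc r"
          by (rule cover_vertices[OF sym irr k1 fN ind])
      qed
      then obtain Qf where Qf: "\<forall>v\<in>V. finite (Qf v) \<and> (\<forall>X\<in>Qf v. X \<subseteq> {u. E v u} \<and> clq E X)
          \<and> (\<forall>w\<in>{u. E v u}. \<exists>X\<in>Qf v. w \<in> X) \<and> k * card (Qf v) \<le> card {u. E v u} + k ^ Suc r"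
        by (rule bchoice[THEN exE]) blast
      define CC where "CC = (\<Union>v\<in>V. insert v ` Qf v)"
      have cc: "clique_cover V E CC"
        unfolding clique_cover_def
      proof (intro conjI ballI allI impI)
        show "finite CC" unfolding CC_def using fin Qf by auto
      next
        fix Y assume "Y \<in> CC"
        then obtain v X where v: "v \<in> V" and X: "X \<in> Qf v" and Y: "Y = insert v X" unfolding CC_def by auto
        have "X \<subseteq> {u. E v u}" "clq E X" using Qf v X by auto
        thus "is_clique V E Y" unfolding Y is_clique_def clq_def using v inV sym by blast
      next
        fix u w assume e: "E u w"
        hence u: "u \<in> V" using inV by auto
        then obtain X where "X \<in> Qf u" "w \<in> X" using Qf e by blast
        thus "\<exists>X\<in>CC. u \<in> X \<and> w \<in> X" unfolding CC_def using u by blast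
      qed
      have "card CC \<le> (\<Sum>v\<in>V. card (insert v ` Qf v))" unfolding CC_def by (rule card_UN_le[OF fin])
      also have "\<dots> \<le> (\<Sum>v\<in>V. card (Qf v))" by (intro sum_mono card_image_le) (use Qf in auto)
      finally have "k * card CC \<le> k * (\<Sum>v\<in>V. card (Qf v))" by simp
      also have "\<dots> = (\<Sum>v\<in>V. k * card (Qf v))" by (simp add: sum_distrib_left)
      also have "\<dots> \<le> (\<Sum>v\<in>V. n + k ^ s)"
      proof (intro sum_mono)
        fix v assume v: "v \<in> V"
        have "card {u. E v u} \<le> n" unfolding n_def using inV fin by (intro card_mono) auto
        thus "k * card (Qf v) \<le> n + k ^ s" using Qf v r by fastforce
      qed
      also have "\<dots> = n * (n + k ^ s)" unfolding n_def by simp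
      finally have main: "k * card CC \<le> n * (n + k ^ s)" .
      have "real (card CC) \<le> 3 * real n powr (2 - 1 / real s)"
        using real_bound[of s n k "card CC"] assms(1) n1 k1 kx xk main unfolding x_def by auto
      thus ?thesis using cc unfolding n_def by blast
    qed
  qed
qed

end
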